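(* For every $n\ge 2$, the compact set $\widetilde\Gamma_n\subset\mathbb C^n$ is polynomially convex.
   Context: $\mathbb D$ is the open unit disc. $\widetilde{\mathbb G}_n=\{(y_1,\dots,y_{n-1},q)\in\mathbb C^n: q\in\mathbb D,\ y_j=\beta_j+\bar\beta_{n-j}q$ for some $\beta_j\in\mathbb C$ with $|\beta_j|+|\beta_{n-j}|<\binom{n}{j}$, $j=1,\dots,n-1\}$; $\widetilde\Gamma_n$ is its closure. A compact $K\subset\mathbb C^n$ is polynomially convex if for every $y\in\mathbb C^n\setminus K$ there is a polynomial $P$ in $n$ variables with $|P(y)|>\sup_{z\in K}|P(z)|$. *)

theory Defs
  imports "HOL-Analysis.Analysis"
begin

text \<open>Points of C^n are modelled as functions z :: nat \<Rightarrow> complex supported on {1..n};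
  coordinates z 1, ..., z (n-1) are y_1, ..., y_(n-1) and z n is q.
  The topology is the product topology on nat \<Rightarrow> complex, which on this
  finite-dimensional carrier is the Euclidean topology of C^n.\<close>

definition Cn :: "nat \<Rightarrow> (nat \<Rightarrow> complex) set" where
  "Cn n = {z. \<forall>j. (j = 0 \<or> n < j) \<longrightarrow> z j = 0}"

definition G_tilde :: "nat \<Rightarrow> (nat \<Rightarrow> complex) set" where
  "G_tilde n = {z. z \<in> Cn n \<and> norm (z n) < 1 \<and>
     (\<exists>\<beta> :: nat \<Rightarrow> complex. \<forall>j\<in>{1..n-1}.
        z j = \<beta> j + cnj (\<beta> (n - j)) * z n \<and>
        norm (\<beta> j) + norm (\<beta> (n - j)) < real (n choose j))}"

definition Gamma_tilde :: "nat \<Rightarrow> (nat \<Rightarrow> complex) set" where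
  "Gamma_tilde n = closure (G_tilde n)"

inductive_set poly_fun :: "nat \<Rightarrow> ((nat \<Rightarrow> complex) \<Rightarrow> complex) set" for n :: nat where
  const: "(\<lambda>z. c) \<in> poly_fun n"
| var: "j \<in> {1..n} \<Longrightarrow> (\<lambda>z. z j) \<in> poly_fun n"
| add: "P \<in> poly_fun n \<Longrightarrow> Q \<in> poly_fun n \<Longrightarrow> (\<lambda>z. P z + Q z) \<in> poly_fun n"
| mult: "P \<in> poly_fun n \<Longrightarrow> Q \<in> poly_fun n \<Longrightarrow> (\<lambda>z. P z * Q z) \<in> poly_fun n"

definition polynomially_convex :: "nat \<Rightarrow> (nat \<Rightarrow> complex) set \<Rightarrow> bool" where
  "polynomially_convex n K \<longleftrightarrow> K \<subseteq> Cn n \<and> compact K \<and>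
     (\<forall>y \<in> Cn n - K. \<exists>P \<in> poly_fun n. norm (P y) > (SUP z\<in>K. norm (P z)))"

end

theory Submission
  imports Defs "HOL-Complex_Analysis.Complex_Analysis"
begin


lemma L1:
  fixes x1 x2 q w :: complex
  assumes "norm w = 1"
  shows "(1 - (norm q)^2) * ((norm (1 - x2*w))^2 - (norm (q*w - x1))^2) =
     (norm (complex_of_real (1 - (norm q)^2) - (x2 - cnj x1 * q) * w))^2 - (norm (x1 - cnj x2 * q))^2"
proof -
  have ww: "w * cnj w = 1" using assms complex_norm_square[of w] by simp
  have e: "\<And>z. complex_of_real ((norm z)^2) = z * cnj z" by (rule complex_norm_square)
  have "complex_of_real ((1 - (norm q)^2) * ((norm (1 - x2*w))^2 - (norm (q*w - x1))^2)) =
        complex_of_real ((norm (complex_of_real (1 - (norm q)^2) - (x2 - cnj x1 * q) * w))^2 - (norm (x1 - cnj x2 * q))^2)"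
    unfolding of_real_mult of_real_diff e of_real_1
    using ww by (simp add: algebra_simps) algebra
  then show ?thesis using of_real_eq_iff by blast
qed

lemma KLa:
  fixes x1 x2 q :: complex
  assumes q: "norm q < 1"
    and H: "\<And>w. norm w = 1 \<Longrightarrow> norm (q*w - x1) \<le> norm (1 - x2*w)"
  shows "norm (x1 - cnj x2 * q) \<le> \<bar>(1 - (norm q)^2) - norm (x2 - cnj x1 * q)\<bar>"
proof -
  define V where "V = x2 - cnj x1 * q"
  define \<rho> where "\<rho> = 1 - (norm q)^2"
  have rho: "\<rho> > 0" unfolding \<rho>_def using q
    by (metis abs_norm_cancel abs_square_less_1 diff_gt_0_iff_gt)
  define w where "w = (if V = 0 then 1 else cnj V / of_real (norm V))"
  have w1: "norm w = 1"
  proof (cases "V = 0")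
    case False
    then show ?thesis unfolding w_def by (simp add: norm_divide)
  qed (simp add: w_def)
  have Vw: "V * w = of_real (norm V)"
  proof (cases "V = 0")
    case False
    have "V * w = (V * cnj V) / of_real (norm V)" using False unfolding w_def by simp
    also have "\<dots> = of_real ((norm V)^2) / of_real (norm V)" by (simp only: complex_norm_square)
    also have "\<dots> = of_real (norm V)" using False by (simp add: power2_eq_square)
    finally show ?thesis .
  qed (simp add: w_def)
  have "0 \<le> \<rho> * ((norm (1 - x2*w))^2 - (norm (q*w - x1))^2)"
  proof -
    have "(norm (q*w - x1))^2 \<le> (norm (1 - x2*w))^2" using H[OF w1] by (simp add: power_mono)
    then show ?thesis using rho by simp
  qed
  also have "\<dots> = (norm (complex_of_real \<rho> - V * w))^2 - (norm (x1 - cnj x2 * q))^2"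
    unfolding \<rho>_def V_def by (rule L1[OF w1])
  finally have "(norm (x1 - cnj x2 * q))^2 \<le> (norm (complex_of_real \<rho> - V * w))^2" by simp
  then have "norm (x1 - cnj x2 * q) \<le> norm (complex_of_real \<rho> - V * w)"
    by (rule power2_le_imp_le) simp_all
  also have "\<dots> = \<bar>\<rho> - norm V\<bar>" unfolding Vw
    by (metis norm_of_real of_real_diff)
  finally show ?thesis unfolding \<rho>_def V_def .
qed

lemma KL0:
  fixes x1 x2 q :: complex
  assumes q: "norm q < 1"
    and H1: "\<And>w. norm w = 1 \<Longrightarrow> norm (q*w - x1) \<le> norm (1 - x2*w)"
    and H2: "\<And>w. norm w = 1 \<Longrightarrow> norm (q*w - x2) \<le> norm (1 - x1*w)"
  shows "norm (x1 - cnj x2 * q) + norm (x2 - cnj x1 * q) \<le> 1 - (norm q)^2"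
proof -
  have a: "norm (x1 - cnj x2 * q) \<le> \<bar>(1 - (norm q)^2) - norm (x2 - cnj x1 * q)\<bar>"
    by (rule KLa[OF q H1])
  have b: "norm (x2 - cnj x1 * q) \<le> \<bar>(1 - (norm q)^2) - norm (x1 - cnj x2 * q)\<bar>"
    by (rule KLa[OF q H2])
  have rho: "1 - (norm q)^2 > 0" using q
    by (metis abs_norm_cancel abs_square_less_1 diff_gt_0_iff_gt)
  show ?thesis using a b rho norm_ge_zero[of "x1 - cnj x2 * q"] norm_ge_zero[of "x2 - cnj x1 * q"]
    by (smt (verit))
qed

lemma to_boundary:
  fixes x1 x2 q :: complex
  assumes H: "\<And>z. norm z < 1 \<Longrightarrow> norm (q*z - x1) \<le> norm (1 - x2*z)"
    and w: "norm w = 1"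
  shows "norm (q*w - x1) \<le> norm (1 - x2*w)"
proof -
  define f where "f = (\<lambda>t::real. norm (1 - x2*(of_real t * w)) - norm (q*(of_real t * w) - x1))"
  have c: "continuous_on UNIV f" unfolding f_def by (intro continuous_intros)
  then have "(f \<longlongrightarrow> f 1) (at_left 1)"
    by (metis UNIV_I continuous_on_def tendsto_within_subset subset_UNIV)
  moreover have "eventually (\<lambda>t. 0 \<le> f t) (at_left (1::real))"
  proof -
    have "eventually (\<lambda>t. t \<in> {0<..<1}) (at_left (1::real))"
      by (rule eventually_at_left_real) simp
    then show ?thesis
    proof (rule eventually_mono)
      fix t :: real assume "t \<in> {0<..<1}"
      then have "norm (of_real t * w) < 1" using w by (simp add: norm_mult)
      then show "0 \<le> f t" using H unfolding f_def by force
    qed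
  qed
  ultimately have "0 \<le> f 1" by (intro tendsto_lowerbound) auto
  then show ?thesis unfolding f_def by simp
qed

lemma FL:
  fixes b1 b2 q z :: complex
  assumes b: "norm b1 + norm b2 < 1" and q: "norm q < 1" and z: "norm z \<le> 1"
  shows "norm (q*z - (b1 + cnj b2 * q)) \<le> norm (1 - (b2 + cnj b1 * q)*z)"
proof -
  define x1 where "x1 = b1 + cnj b2 * q"
  define x2 where "x2 = b2 + cnj b1 * q"
  define \<rho> where "\<rho> = 1 - (norm q)^2"
  have rho: "\<rho> > 0" unfolding \<rho>_def using q
    by (metis abs_norm_cancel abs_square_less_1 diff_gt_0_iff_gt)
  have qq: "q * cnj q = of_real ((norm q)^2)" using complex_norm_square[of q] by simp
  have U: "x1 - cnj x2 * q = of_real \<rho> * b1"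
    unfolding x1_def x2_def \<rho>_def of_real_diff qq[symmetric] by (simp add: algebra_simps)
  have V: "x2 - cnj x1 * q = of_real \<rho> * b2"
    unfolding x1_def x2_def \<rho>_def of_real_diff qq[symmetric] by (simp add: algebra_simps)
  have bd: "norm (q*w - x1) \<le> norm (1 - x2*w)" if w: "norm w = 1" for w
  proof -
    have "norm (1 - b2*w) \<ge> 1 - norm b2"
      using norm_triangle_ineq2[of 1 "b2*w"] w by (simp add: norm_mult)
    then have "norm (1 - b2*w) > norm b1" using b by linarith
    then have "\<rho> * norm b1 \<le> \<rho> * norm (1 - b2*w)" using rho by simp
    then have "(norm (of_real \<rho> * b1))^2 \<le> (norm (complex_of_real \<rho> - of_real \<rho> * b2 * w))^2"
    proof -
      have "complex_of_real \<rho> - of_real \<rho> * b2 * w = of_real \<rho> * (1 - b2*w)" by (simp add: algebra_simps)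
      then have "norm (complex_of_real \<rho> - of_real \<rho> * b2 * w) = \<rho> * norm (1 - b2*w)"
        using rho by (simp add: norm_mult)
      moreover have "norm (of_real \<rho> * b1) = \<rho> * norm b1" using rho by (simp add: norm_mult)
      ultimately show ?thesis using rho \<open>\<rho> * norm b1 \<le> \<rho> * norm (1 - b2*w)\<close>
        by (simp add: power_mono)
    qed
    also have "(norm (complex_of_real \<rho> - of_real \<rho> * b2 * w))^2 - (norm (of_real \<rho> * b1))^2
        = \<rho> * ((norm (1 - x2*w))^2 - (norm (q*w - x1))^2)"
      using L1[OF w, of q x2 x1] unfolding U V \<rho>_def by (simp add: mult.assoc)
    finally have "0 \<le> \<rho> * ((norm (1 - x2*w))^2 - (norm (q*w - x1))^2)" by simp
    then have "(norm (q*w - x1))^2 \<le> (norm (1 - x2*w))^2" using rho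
      by (simp add: zero_le_mult_iff)
    then show ?thesis by (rule power2_le_imp_le) simp_all
  qed
  have x2n: "norm x2 < 1"
  proof -
    have "norm x2 \<le> norm b2 + norm b1 * norm q"
      unfolding x2_def using norm_triangle_ineq[of b2 "cnj b1 * q"] by (simp add: norm_mult)
    also have "\<dots> \<le> norm b2 + norm b1" using q by (simp add: mult_left_le)
    finally show ?thesis using b by linarith
  qed
  have Dnz: "1 - x2 * u \<noteq> 0" if "norm u \<le> 1" for u
  proof
    assume "1 - x2 * u = 0"
    then have "norm (x2 * u) = 1" by (metis eq_iff_diff_eq_0 norm_one)
    moreover have "norm (x2 * u) < 1"
    proof -
      have "norm (x2 * u) \<le> norm x2" using that by (simp add: norm_mult mult_left_le)
      then show ?thesis using x2n by linarith
    qed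
    ultimately show False by simp
  qed
  have "norm ((q*z - x1) / (1 - x2*z)) \<le> 1"
  proof (rule maximum_modulus_frontier[where S = "cball 0 1" and f = "\<lambda>u. (q*u - x1) / (1 - x2*u)"])
    show "(\<lambda>u. (q*u - x1) / (1 - x2*u)) holomorphic_on interior (cball 0 1)"
      using Dnz by (intro holomorphic_intros) auto
    show "continuous_on (closure (cball 0 1)) (\<lambda>u. (q*u - x1) / (1 - x2*u))"
      using Dnz by (intro continuous_intros) auto
    show "bounded (cball (0::complex) 1)" by simp
    show "z \<in> cball 0 1" using z by simp
    fix u :: complex assume "u \<in> frontier (cball 0 1)"
    then have u: "norm u = 1" by simp
    show "norm ((q*u - x1) / (1 - x2*u)) \<le> 1"
      using bd[OF u] Dnz[of u] u by (simp add: norm_divide divide_le_eq_1)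
  qed
  then show ?thesis using Dnz[OF z] unfolding x1_def[symmetric] x2_def[symmetric]
    by (simp add: norm_divide divide_le_eq_1)
qed



lemma coord_cont [continuous_intros]: "continuous_on S (\<lambda>x::'a \<Rightarrow> 'b::topological_space. x i)"
  by (rule continuous_on_subset[OF continuous_on_product_coordinates]) simp

definition Phi :: "nat \<Rightarrow> (nat \<Rightarrow> complex) \<Rightarrow> bool" where
  "Phi n y \<longleftrightarrow> norm (y n) \<le> 1 \<and> (\<forall>j\<in>{1..n-1}. norm (y j) \<le> real (n choose j) \<and>
     (\<forall>z. norm z < 1 \<longrightarrow> norm (y n * z - y j / of_nat (n choose j)) \<le> norm (1 - y (n-j) / of_nat (n choose j) * z)))"

lemma idx:
  assumes "j \<in> {1..n-1}"
  shows "n - j \<in> {1..n-1}" "n - (n - j) = j" "n choose (n - j) = n choose j" "j \<noteq> n" "n - j \<noteq> n"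
    "j \<le> n" "(0::real) < real (n choose j)"
  using assms binomial_symmetric[of j n] zero_less_binomial[of j n] by auto

lemma Phi_closed: "closed {y. Phi n y}"
proof -
  have "{y. Phi n y} = {y. norm (y n) \<le> 1} \<inter> (\<Inter>j\<in>{1..n-1}. {y. norm (y j) \<le> real (n choose j)} \<inter>
     (\<Inter>z\<in>ball 0 1. {y. norm (y n * z - y j / of_nat (n choose j)) \<le> norm (1 - y (n-j) / of_nat (n choose j) * z)}))"
    unfolding Phi_def by auto
  moreover have "closed \<dots>"
    by (intro closed_Int closed_INT ballI closed_Collect_le continuous_intros) (auto simp: binomial_eq_0_iff)
  ultimately show ?thesis by simp
qed

lemma G_Phi:
  assumes "y \<in> G_tilde n"
  shows "Phi n y"
proof -
  from assms obtain \<beta> where yC: "y \<in> Cn n" and q: "norm (y n) < 1"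
    and hb: "\<forall>j\<in>{1..n-1}. y j = \<beta> j + cnj (\<beta> (n - j)) * y n \<and>
        norm (\<beta> j) + norm (\<beta> (n - j)) < real (n choose j)"
    unfolding G_tilde_def by blast
  have "norm (y j) \<le> real (n choose j) \<and>
     (\<forall>z. norm z < 1 \<longrightarrow> norm (y n * z - y j / of_nat (n choose j)) \<le> norm (1 - y (n-j) / of_nat (n choose j) * z))"
    if j: "j \<in> {1..n-1}" for j
  proof -
    note I = idx[OF j]
    define cc :: complex where "cc = of_nat (n choose j)"
    have cpos: "real (n choose j) > 0" using I by simp
    have ncc: "norm cc = real (n choose j)" unfolding cc_def by simp
    have cc0: "cc \<noteq> 0" using cpos ncc by auto
    have cnjcc: "cnj cc = cc" unfolding cc_def by simp
    have h1: "y j = \<beta> j + cnj (\<beta> (n - j)) * y n" and hb1: "norm (\<beta> j) + norm (\<beta> (n - j)) < real (n choose j)"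
      using hb j by auto
    have h2: "y (n-j) = \<beta> (n-j) + cnj (\<beta> j) * y n" using hb I(1) I(2) by force
    define b1 where "b1 = \<beta> j / cc"
    define b2 where "b2 = \<beta> (n-j) / cc"
    have bb: "norm b1 + norm b2 < 1"
      unfolding b1_def b2_def norm_divide ncc using hb1 cpos by (simp add: add_divide_distrib[symmetric])
    have x1: "y j / cc = b1 + cnj b2 * y n"
      unfolding b1_def b2_def h1 using cc0 cnjcc by (simp add: field_simps)
    have x2: "y (n-j) / cc = b2 + cnj b1 * y n"
      unfolding b1_def b2_def h2 using cc0 cnjcc by (simp add: field_simps)
    have "norm (y j) \<le> norm (\<beta> j) + norm (\<beta> (n - j)) * norm (y n)"
      unfolding h1 using norm_triangle_ineq[of "\<beta> j" "cnj (\<beta> (n - j)) * y n"] by (simp add: norm_mult)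
    also have "\<dots> \<le> norm (\<beta> j) + norm (\<beta> (n - j))" using q by (simp add: mult_left_le)
    finally have A: "norm (y j) \<le> real (n choose j)" using hb1 by linarith
    have B: "norm (y n * z - y j / of_nat (n choose j)) \<le> norm (1 - y (n-j) / of_nat (n choose j) * z)"
      if z: "norm z < 1" for z
      using FL[OF bb q, of z] z x1 x2 unfolding cc_def by simp
    show ?thesis using A B by blast
  qed
  then show ?thesis unfolding Phi_def using q by auto
qed

lemma closure_G_Phi: "y \<in> closure (G_tilde n) \<Longrightarrow> Phi n y"
proof -
  have "closure (G_tilde n) \<subseteq> {y. Phi n y}"
    by (rule closure_minimal) (use G_Phi Phi_closed in auto)
  then show "y \<in> closure (G_tilde n) \<Longrightarrow> Phi n y" by auto
qed

lemma lim_closure: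
  fixes g :: "real \<Rightarrow> (nat \<Rightarrow> complex)"
  assumes "continuous_on UNIV g" "\<And>t. 0 < t \<Longrightarrow> t < 1 \<Longrightarrow> g t \<in> A"
  shows "g 1 \<in> closure A"
proof (rule Lim_in_closed_set[of "closure A" g "at_left 1"])
  show "closed (closure A)" by simp
  have "eventually (\<lambda>t. t \<in> {0<..<1}) (at_left (1::real))"
    by (rule eventually_at_left_real) simp
  then show "eventually (\<lambda>t. g t \<in> closure A) (at_left 1)"
    by (rule eventually_mono) (use assms(2) closure_subset in auto)
  show "at_left (1::real) \<noteq> bot" by simp
  show "(g \<longlongrightarrow> g 1) (at_left 1)"
    using assms(1) by (metis UNIV_I continuous_on_def tendsto_within_subset subset_UNIV)
qed



lemma Phi_closure_in:
  assumes yC: "y \<in> Cn n" and P: "Phi n y" and q: "norm (y n) < 1"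
  shows "y \<in> closure (G_tilde n)"
proof -
  define \<rho> where "\<rho> = 1 - (norm (y n))^2"
  have rho: "\<rho> > 0" unfolding \<rho>_def using q
    by (metis abs_norm_cancel abs_square_less_1 diff_gt_0_iff_gt)
  have qq: "y n * cnj (y n) = of_real ((norm (y n))^2)" using complex_norm_square[of "y n"] by simp
  define \<beta> where "\<beta> = (\<lambda>j. (y j - cnj (y (n-j)) * y n) / of_real \<rho>)"
  have KI: "y j = \<beta> j + cnj (\<beta> (n - j)) * y n" if j: "j \<in> {1..n-1}" for j
  proof -
    note I = idx[OF j]
    have "\<beta> j + cnj (\<beta> (n - j)) * y n = ((y j - cnj (y (n-j)) * y n) + (cnj (y (n-j)) - y j * cnj (y n)) * y n) / of_real \<rho>"
      unfolding \<beta>_def I(2) using rho by (simp add: field_simps)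
    also have "\<dots> = y j * (1 - y n * cnj (y n)) / of_real \<rho>" by (simp add: algebra_simps)
    also have "\<dots> = y j * of_real \<rho> / of_real \<rho>"
    proof -
      have r: "1 - y n * cnj (y n) = of_real \<rho>" unfolding \<rho>_def qq by simp
      show ?thesis by (simp only: r)
    qed
    also have "\<dots> = y j" using rho by simp
    finally show ?thesis by simp
  qed
  have KB: "norm (\<beta> j) + norm (\<beta> (n - j)) \<le> real (n choose j)" if j: "j \<in> {1..n-1}" for j
  proof -
    note I = idx[OF j]
    define cc :: complex where "cc = of_nat (n choose j)"
    have ncc: "norm cc = real (n choose j)" unfolding cc_def by simp
    have cc0: "cc \<noteq> 0" using I(7) ncc by auto
    have cnjcc: "cnj cc = cc" unfolding cc_def by simp
    have Pj: "\<forall>z. norm z < 1 \<longrightarrow> norm (y n * z - y j / cc) \<le> norm (1 - y (n-j) / cc * z)"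
      using P j unfolding Phi_def cc_def by auto
    have Pnj: "\<forall>z. norm z < 1 \<longrightarrow> norm (y n * z - y (n-j) / cc) \<le> norm (1 - y j / cc * z)"
    proof -
      have "\<forall>z. norm z < 1 \<longrightarrow> norm (y n * z - y (n-j) / of_nat (n choose (n-j))) \<le> norm (1 - y (n-(n-j)) / of_nat (n choose (n-j)) * z)"
        using P I(1) unfolding Phi_def by blast
      then show ?thesis unfolding I(2) I(3) cc_def .
    qed
    have K: "norm (y j / cc - cnj (y (n-j) / cc) * y n) + norm (y (n-j) / cc - cnj (y j / cc) * y n) \<le> \<rho>"
      unfolding \<rho>_def
    proof (rule KL0[OF q])
      fix w :: complex assume "norm w = 1"
      then show "norm (y n * w - y j / cc) \<le> norm (1 - y (n-j) / cc * w)"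
        using to_boundary[of "y n" "y j / cc" "y (n-j) / cc" w] Pj by blast
    next
      fix w :: complex assume "norm w = 1"
      then show "norm (y n * w - y (n-j) / cc) \<le> norm (1 - y j / cc * w)"
        using to_boundary[of "y n" "y (n-j) / cc" "y j / cc" w] Pnj by blast
    qed
    have e1: "\<beta> j = cc * (y j / cc - cnj (y (n-j) / cc) * y n) / of_real \<rho>"
      unfolding \<beta>_def using cc0 cnjcc rho by (simp add: field_simps)
    have e2: "\<beta> (n-j) = cc * (y (n-j) / cc - cnj (y j / cc) * y n) / of_real \<rho>"
      unfolding \<beta>_def I(2) using cc0 cnjcc rho by (simp add: field_simps)
    have "norm (\<beta> j) + norm (\<beta> (n - j)) = real (n choose j) * (norm (y j / cc - cnj (y (n-j) / cc) * y n) + norm (y (n-j) / cc - cnj (y j / cc) * y n)) / \<rho>"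
      unfolding e1 e2 norm_divide norm_mult ncc using rho by (simp add: field_simps)
    also have "\<dots> \<le> real (n choose j) * \<rho> / \<rho>"
      using K rho I(7) by (intro divide_right_mono mult_left_mono) auto
    finally show ?thesis using rho by simp
  qed
  define g where "g = (\<lambda>t::real. \<lambda>i. if i = n then y i else of_real t * y i)"
  have "g 1 \<in> closure (G_tilde n)"
  proof (rule lim_closure)
    show "continuous_on UNIV g" unfolding g_def
    proof (intro continuous_on_coordinatewise_then_product)
      fix i show "continuous_on UNIV (\<lambda>x. if i = n then y i else complex_of_real x * y i)"
        by (cases "i = n") (auto intro!: continuous_intros)
    qed
    fix t :: real assume t: "0 < t" "t < 1"
    have "g t \<in> Cn n" using yC unfolding Cn_def g_def by auto
    moreover have "norm (g t n) < 1" using q unfolding g_def by simp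
    moreover have "\<forall>j\<in>{1..n-1}. g t j = (of_real t * \<beta> j) + cnj (of_real t * \<beta> (n - j)) * g t n \<and>
        norm (of_real t * \<beta> j) + norm (of_real t * \<beta> (n - j)) < real (n choose j)"
    proof
      fix j assume j: "j \<in> {1..n-1}"
      note I = idx[OF j]
      have "g t j = (of_real t * \<beta> j) + cnj (of_real t * \<beta> (n - j)) * g t n"
        unfolding g_def using I(4) KI[OF j] by (simp add: algebra_simps)
      moreover have "norm (of_real t * \<beta> j) + norm (of_real t * \<beta> (n - j)) < real (n choose j)"
      proof -
        have "norm (of_real t * \<beta> j) + norm (of_real t * \<beta> (n - j)) = t * (norm (\<beta> j) + norm (\<beta> (n - j)))"
          using t by (simp add: norm_mult algebra_simps)
        also have "\<dots> \<le> t * real (n choose j)" using KB[OF j] t by simp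
        also have "\<dots> < real (n choose j)" using t I(7) by simp
        finally show ?thesis .
      qed
      ultimately show "g t j = (of_real t * \<beta> j) + cnj (of_real t * \<beta> (n - j)) * g t n \<and>
        norm (of_real t * \<beta> j) + norm (of_real t * \<beta> (n - j)) < real (n choose j)" by blast
    qed
    ultimately show "g t \<in> G_tilde n" unfolding G_tilde_def
      using exI[of "\<lambda>b. \<forall>j\<in>{1..n-1}. g t j = b j + cnj (b (n-j)) * g t n \<and> norm (b j) + norm (b (n-j)) < real (n choose j)" "\<lambda>j. complex_of_real t * \<beta> j"]
      by blast
  qed
  moreover have "g 1 = y" unfolding g_def by auto
  ultimately show ?thesis by simp
qed

lemma Phi_closure:
  assumes yC: "y \<in> Cn n" and P: "Phi n y"
  shows "y \<in> closure (G_tilde n)"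
proof -
  define h where "h = (\<lambda>t::real. \<lambda>i. if i = n then of_real (t^2) * y i else of_real t * y i)"
  have "h 1 \<in> closure (closure (G_tilde n))"
  proof (rule lim_closure)
    show "continuous_on UNIV h" unfolding h_def
    proof (intro continuous_on_coordinatewise_then_product)
      fix i show "continuous_on UNIV (\<lambda>x. if i = n then complex_of_real (x^2) * y i else complex_of_real x * y i)"
        by (cases "i = n") (auto intro!: continuous_intros)
    qed
    fix t :: real assume t: "0 < t" "t < 1"
    have q1: "norm (y n) \<le> 1" using P unfolding Phi_def by auto
    have hC: "h t \<in> Cn n" using yC unfolding Cn_def h_def by auto
    have hn: "h t n = of_real (t^2) * y n" unfolding h_def by simp
    have t2: "t^2 < 1" using t by (simp add: power_less_one_iff)
    have hq: "norm (h t n) < 1"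
    proof -
      have "norm (h t n) = t^2 * norm (y n)" unfolding hn using t by (simp add: norm_mult norm_power)
      also have "\<dots> \<le> t^2" using q1 by (simp add: mult_left_le)
      finally show ?thesis using t2 by linarith
    qed
    have "Phi n (h t)"
      unfolding Phi_def
    proof (intro conjI ballI allI impI)
      show "norm (h t n) \<le> 1" using hq by simp
      fix j assume j: "j \<in> {1..n-1}"
      note I = idx[OF j]
      have hj: "h t j = of_real t * y j" and hnj: "h t (n-j) = of_real t * y (n-j)"
        unfolding h_def using I(4) I(5) by auto
      have Pj: "norm (y j) \<le> real (n choose j)"
        and Pz: "\<And>z. norm z < 1 \<Longrightarrow> norm (y n * z - y j / of_nat (n choose j)) \<le> norm (1 - y (n-j) / of_nat (n choose j) * z)"
        using P j unfolding Phi_def by auto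
      show "norm (h t j) \<le> real (n choose j)" unfolding hj using Pj t
        by (simp add: norm_mult) (metis less_eq_real_def mult_left_le_one_le norm_ge_zero order_trans)
      fix z :: complex assume z: "norm z < 1"
      have tz: "norm (of_real t * z) < 1"
      proof -
        have "norm (of_real t * z) = t * norm z" using t by (simp add: norm_mult)
        also have "\<dots> \<le> norm z" using t by (simp add: mult_left_le_one_le)
        finally show ?thesis using z by linarith
      qed
      have "norm (h t n * z - h t j / of_nat (n choose j)) = t * norm (y n * (of_real t * z) - y j / of_nat (n choose j))"
      proof -
        have "h t n * z - h t j / of_nat (n choose j) = of_real t * (y n * (of_real t * z) - y j / of_nat (n choose j))"
          unfolding hn hj by (simp add: algebra_simps power2_eq_square)
        then show ?thesis using t by (simp add: norm_mult)
      qed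
      also have "\<dots> \<le> norm (y n * (of_real t * z) - y j / of_nat (n choose j))"
        using t by (simp add: mult_left_le_one_le)
      also have "\<dots> \<le> norm (1 - y (n-j) / of_nat (n choose j) * (of_real t * z))" by (rule Pz[OF tz])
      also have "\<dots> = norm (1 - h t (n-j) / of_nat (n choose j) * z)" unfolding hnj by (simp add: algebra_simps)
      finally show "norm (h t n * z - h t j / of_nat (n choose j)) \<le> norm (1 - h t (n-j) / of_nat (n choose j) * z)" .
    qed
    then show "h t \<in> closure (G_tilde n)" using Phi_closure_in[OF hC _ hq] by blast
  qed
  moreover have "h 1 = y" unfolding h_def by auto
  ultimately show ?thesis by simp
qed



lemma pf_diff: "P \<in> poly_fun n \<Longrightarrow> Q \<in> poly_fun n \<Longrightarrow> (\<lambda>w. P w - Q w) \<in> poly_fun n"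
proof -
  assume P: "P \<in> poly_fun n" and Q: "Q \<in> poly_fun n"
  have "(\<lambda>w. (\<lambda>_. -1) w * Q w) \<in> poly_fun n" by (rule poly_fun.mult[OF poly_fun.const Q])
  then have "(\<lambda>w. P w + (\<lambda>_. -1) w * Q w) \<in> poly_fun n" by (rule poly_fun.add[OF P])
  then show ?thesis by simp
qed

lemma pf_div: "P \<in> poly_fun n \<Longrightarrow> (\<lambda>w. P w / c) \<in> poly_fun n"
proof -
  assume P: "P \<in> poly_fun n"
  have "(\<lambda>w. P w * (\<lambda>_. inverse c) w) \<in> poly_fun n" by (rule poly_fun.mult[OF P poly_fun.const])
  then show ?thesis by (simp add: divide_inverse)
qed

lemma pf_pow: "P \<in> poly_fun n \<Longrightarrow> (\<lambda>w. P w ^ k) \<in> poly_fun n"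
proof (induction k)
  case 0 then show ?case using poly_fun.const[of 1 n] by simp
next
  case (Suc k)
  then show ?case using poly_fun.mult[OF Suc.prems Suc.IH] by simp
qed

lemma pf_sum: "finite A \<Longrightarrow> (\<And>k. k \<in> A \<Longrightarrow> (\<lambda>w. F k w) \<in> poly_fun n) \<Longrightarrow> (\<lambda>w. \<Sum>k\<in>A. F k w) \<in> poly_fun n"
proof (induction A rule: finite_induct)
  case empty then show ?case using poly_fun.const[of 0 n] by simp
next
  case (insert x A2)
  then show ?case using poly_fun.add[of "\<lambda>w. F x w" n] by simp
qed

lemma geo_bounds:
  fixes a :: complex and s :: real
  assumes "norm a \<le> s" "s < 1"
  shows "norm (\<Sum>k<N. a^k) * norm (1 - a) \<le> 1 + s^N"
    and "1 - s^N \<le> norm (\<Sum>k<N. a^k) * norm (1 - a)"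
proof -
  have a1: "a \<noteq> 1" using assms by auto
  then have "1 - a \<noteq> 0" by simp
  then have e: "norm (\<Sum>k<N. a^k) * norm (1 - a) = norm (1 - a^N)"
    using a1 by (simp add: sum_gp_strict norm_divide)
  have an: "norm (a^N) \<le> s^N" using assms by (simp add: norm_power power_mono)
  show "norm (\<Sum>k<N. a^k) * norm (1 - a) \<le> 1 + s^N"
    unfolding e using norm_triangle_ineq4[of 1 "a^N"] an by simp
  show "1 - s^N \<le> norm (\<Sum>k<N. a^k) * norm (1 - a)"
    unfolding e using norm_triangle_ineq2[of 1 "a^N"] an by simp
qed

lemma zero_in_G: "(\<lambda>_. 0) \<in> G_tilde n"
proof -
  have "\<forall>j\<in>{1..n-1}. (0::complex) = 0 + cnj 0 * 0 \<and> norm (0::complex) + norm (0::complex) < real (n choose j)"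
    by (auto simp: zero_less_binomial)
  then show ?thesis unfolding G_tilde_def Cn_def
    using exI[of "\<lambda>b. \<forall>j\<in>{1..n-1}. (0::complex) = b j + cnj (b (n-j)) * 0 \<and> norm (b j) + norm (b (n-j)) < real (n choose j)" "\<lambda>_. 0"]
    by simp
qed

lemma Cn_closed: "closed (Cn n)"
proof -
  have "Cn n = (\<Inter>j\<in>{j. j = 0 \<or> n < j}. {z. z j = 0})" unfolding Cn_def by auto
  moreover have "closed \<dots>" by (intro closed_INT ballI closed_Collect_eq continuous_intros)
  ultimately show ?thesis by simp
qed

lemma Gamma_compact: "compact (Gamma_tilde n)"
proof -
  define R :: real where "R = 2^n"
  define B where "B = PiE UNIV (\<lambda>i::nat. cball (0::complex) R)"
  have "compactin (product_topology (\<lambda>i. euclidean) UNIV) B"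
    unfolding B_def by (simp add: compactin_PiE)
  then have cB: "compact B" by (simp add: euclidean_product_topology)
  have "G_tilde n \<subseteq> B"
  proof
    fix w assume w: "w \<in> G_tilde n"
    then obtain \<beta> where wC: "w \<in> Cn n" and q: "norm (w n) < 1"
      and hb: "\<forall>j\<in>{1..n-1}. w j = \<beta> j + cnj (\<beta> (n - j)) * w n \<and>
        norm (\<beta> j) + norm (\<beta> (n - j)) < real (n choose j)"
      unfolding G_tilde_def by blast
    have "norm (w i) \<le> R" for i
    proof -
      have R1: "1 \<le> R" unfolding R_def by simp
      show ?thesis
      proof (cases "i \<in> {1..n-1}")
        case True
        have h1: "w i = \<beta> i + cnj (\<beta> (n - i)) * w n" and hb1: "norm (\<beta> i) + norm (\<beta> (n - i)) < real (n choose i)"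
          using hb True by auto
        have "norm (w i) \<le> norm (\<beta> i) + norm (\<beta> (n - i)) * norm (w n)"
          unfolding h1 using norm_triangle_ineq[of "\<beta> i" "cnj (\<beta> (n - i)) * w n"] by (simp add: norm_mult)
        also have "\<dots> \<le> norm (\<beta> i) + norm (\<beta> (n - i))" using q by (simp add: mult_left_le)
        also have "\<dots> \<le> real (n choose i)" using hb1 by linarith
        also have "\<dots> \<le> R" unfolding R_def using binomial_le_pow2[of n i]
          by (metis of_nat_le_iff of_nat_numeral of_nat_power)
        finally show ?thesis .
      next
        case False
        show ?thesis
        proof (cases "i = n")
          case True then show ?thesis using q R1 by simp
        next
          case False
          with \<open>i \<notin> {1..n-1}\<close> have "i = 0 \<or> n < i" by auto
          then have "w i = 0" using wC unfolding Cn_def by blast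
          then show ?thesis using R1 by simp
        qed
      qed
    qed
    then show "w \<in> B" unfolding B_def by (simp add: PiE_UNIV_domain)
  qed
  then have "Gamma_tilde n \<subseteq> B" unfolding Gamma_tilde_def
    using closure_minimal compact_imp_closed[OF cB] by blast
  then have "Gamma_tilde n = B \<inter> Gamma_tilde n" by blast
  moreover have "compact (B \<inter> Gamma_tilde n)" using cB unfolding Gamma_tilde_def by blast
  ultimately show ?thesis by simp
qed



theorem mainTheorem5:
  fixes n :: nat
  assumes "n \<ge> 2"
  shows "polynomially_convex n (Gamma_tilde n)"
proof -
  let ?K = "Gamma_tilde n"
  have KC: "?K \<subseteq> Cn n" unfolding Gamma_tilde_def
    by (rule closure_minimal) (use Cn_closed in \<open>auto simp: G_tilde_def\<close>)
  have Kne: "?K \<noteq> {}" unfolding Gamma_tilde_def using zero_in_G closure_subset by blast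
  have KPhi: "\<And>w. w \<in> ?K \<Longrightarrow> Phi n w" unfolding Gamma_tilde_def by (rule closure_G_Phi)
  have nn: "n \<in> {1..n}" using assms by simp
  have sep: "\<exists>P \<in> poly_fun n. norm (P y) > (SUP z\<in>?K. norm (P z))" if y: "y \<in> Cn n - ?K" for y
  proof -
    have nP: "\<not> Phi n y" using y Phi_closure unfolding Gamma_tilde_def by blast
    show ?thesis
    proof (cases "norm (y n) > 1")
      case True
      have "(SUP z\<in>?K. norm (z n)) \<le> 1"
        by (rule cSUP_least[OF Kne]) (use KPhi in \<open>auto simp: Phi_def\<close>)
      then show ?thesis using True poly_fun.var[OF nn] by force
    next
      case q1: False
      show ?thesis
      proof (cases "\<exists>j\<in>{1..n-1}. norm (y j) > real (n choose j)")
        case True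
        then obtain j where j: "j \<in> {1..n-1}" and yj: "norm (y j) > real (n choose j)" by blast
        have "(SUP z\<in>?K. norm (z j)) \<le> real (n choose j)"
          by (rule cSUP_least[OF Kne]) (use KPhi j in \<open>auto simp: Phi_def\<close>)
        moreover have "(\<lambda>z. z j) \<in> poly_fun n" using j by (intro poly_fun.var) auto
        ultimately show ?thesis using yj by force
      next
        case False
        then have yb: "\<forall>j\<in>{1..n-1}. norm (y j) \<le> real (n choose j)" by auto
        with nP q1 obtain j z where j: "j \<in> {1..n-1}" and z: "norm z < 1"
          and viol: "norm (y n * z - y j / of_nat (n choose j)) > norm (1 - y (n-j) / of_nat (n choose j) * z)"
          unfolding Phi_def by force
        note I = idx[OF j]
        define cc :: complex where "cc = of_nat (n choose j)"
        have ncc: "norm cc = real (n choose j)" unfolding cc_def by simp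
        have cpos: "real (n choose j) > 0" using I by simp
        define s where "s = norm z"
        have s1: "s < 1" using z unfolding s_def by simp
        have s0: "0 \<le> s" unfolding s_def by simp
        have abound: "norm (w (n-j) / cc * z) \<le> s" if "norm (w (n-j)) \<le> real (n choose j)" for w :: "nat \<Rightarrow> complex"
        proof -
          have "norm (w (n-j) / cc * z) = (norm (w (n-j)) / real (n choose j)) * s"
            unfolding s_def by (simp add: norm_mult norm_divide ncc)
          also have "\<dots> \<le> 1 * s" using that cpos s0 by (intro mult_right_mono) (auto simp: divide_le_eq_1)
          finally show ?thesis by simp
        qed
        have yab: "norm (y (n-j) / cc * z) \<le> s"
          using abound yb I(1) I(3) by (metis)
        define Nm where "Nm = y n * z - y j / cc"
        define Dn where "Dn = 1 - y (n-j) / cc * z"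
        have Dn0: "norm Dn > 0"
        proof -
          have "norm Dn \<ge> 1 - norm (y (n-j) / cc * z)" unfolding Dn_def using norm_triangle_ineq2[of "1::complex" "y (n-j) / cc * z"] by simp
          then show ?thesis using yab s1 by linarith
        qed
        define L where "L = norm Nm / norm Dn"
        have L1: "L > 1" unfolding L_def using viol Dn0 unfolding Nm_def Dn_def cc_def by simp
        obtain N where N: "s^N < (L - 1) / (L + 1)"
          using real_arch_pow_inv[of "(L - 1) / (L + 1)" s] L1 s1 by auto
        define P where "P = (\<lambda>w::nat\<Rightarrow>complex. (w n * z - w j / cc) * (\<Sum>k<N. (w (n-j) / cc * z)^k))"
        have Ppoly: "P \<in> poly_fun n" unfolding P_def
        proof (rule poly_fun.mult)
          show "(\<lambda>w. w n * z - w j / cc) \<in> poly_fun n"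
            by (intro pf_diff poly_fun.mult pf_div poly_fun.var poly_fun.const) (use j nn in auto)
          show "(\<lambda>w. \<Sum>k<N. (w (n-j) / cc * z)^k) \<in> poly_fun n"
          proof (rule pf_sum)
            fix k show "(\<lambda>w. (w (n-j) / cc * z)^k) \<in> poly_fun n"
              by (intro pf_pow poly_fun.mult pf_div poly_fun.var poly_fun.const) (use I(1) in auto)
          qed simp
        qed
        have Kb: "norm (P w) \<le> 1 + s^N" if w: "w \<in> ?K" for w
        proof -
          have Pw: "Phi n w" using KPhi w .
          have wn: "norm (w n * z - w j / cc) \<le> norm (1 - w (n-j) / cc * z)"
            using Pw j z unfolding Phi_def cc_def by auto
          have "norm (w (n-j)) \<le> real (n choose (n-j))" using Pw I(1) unfolding Phi_def by auto
          then have wa: "norm (w (n-j) / cc * z) \<le> s" using abound I(3) by simp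
          have "norm (P w) = norm (w n * z - w j / cc) * norm (\<Sum>k<N. (w (n-j) / cc * z)^k)"
            unfolding P_def by (simp add: norm_mult)
          also have "\<dots> \<le> norm (1 - w (n-j) / cc * z) * norm (\<Sum>k<N. (w (n-j) / cc * z)^k)"
            using wn by (intro mult_right_mono) auto
          also have "\<dots> \<le> 1 + s^N" using geo_bounds(1)[OF wa s1, of N] by (simp add: mult.commute)
          finally show ?thesis .
        qed
        have "(SUP w\<in>?K. norm (P w)) \<le> 1 + s^N"
          by (rule cSUP_least[OF Kne]) (use Kb in auto)
        moreover have "norm (P y) > 1 + s^N"
        proof -
          have "norm (P y) = L * (norm (\<Sum>k<N. (y (n-j) / cc * z)^k) * norm Dn)"
          proof -
            have LD: "L * norm Dn = norm Nm" unfolding L_def using Dn0 by simp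
            have "norm (P y) = norm Nm * norm (\<Sum>k<N. (y (n-j) / cc * z)^k)"
              unfolding P_def Nm_def by (simp add: norm_mult)
            also have "\<dots> = L * (norm (\<Sum>k<N. (y (n-j) / cc * z)^k) * norm Dn)"
              unfolding LD[symmetric] by (simp add: mult_ac)
            finally show ?thesis .
          qed
          also have "\<dots> \<ge> L * (1 - s^N)"
            using geo_bounds(2)[OF yab s1, of N] L1 unfolding Dn_def by (intro mult_left_mono) auto
          finally have a: "L * (1 - s^N) \<le> norm (P y)" .
          have "s^N * (L + 1) < L - 1" using N L1 by (simp add: field_simps)
          then have "1 + s^N < L * (1 - s^N)" by (simp add: algebra_simps)
          then show ?thesis using a by linarith
        qed
        ultimately show ?thesis using Ppoly by force
      qed
    qed
  qed
  show ?thesis unfolding polynomially_convex_def using KC Gamma_compact sep by blast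
qed

end
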